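(* Let $F$ be a finite abelian group with cardinality $|F|\ge3$. Then $\lambda(F)\le\frac1{|F|}\log(|F|-1)$.
   Context: For a compact abelian group $G$ with normalized Haar measure $\mu$ (for finite $G$, the uniform probability measure) and (multiplicative) dual group of characters $\widehat{G}$, let $\mathbb{Z}[\widehat{G}]$ denote the ring of integral linear combinations of characters, regarded as functions on $G$. For $f\in\mathbb{Z}[\widehat{G}]$, the logarithmic Mahler measure over $G$ is $\mathsf{m}_G(f)=\int_G\log|f|\,d\mu$ (with $\log 0=-\infty$). The Lehmer constant of $G$ is $\lambda(G)=\inf\{\mathsf{m}_G(f): f\in\mathbb{Z}[\widehat{G}],\ \mathsf{m}_G(f)>0\}$. *)

theory Defs
  imports Complex_Main "HOL-Library.Extended_Real"
begin

text \<open>A finite abelian group is modelled as a finite type of class ab_group_add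
  (written additively). Characters are homomorphisms into the multiplicative
  group of nonzero complex numbers.\<close>

definition characters :: "('a::ab_group_add \<Rightarrow> complex) set" where
  "characters = {\<chi>. \<chi> 0 = 1 \<and> (\<forall>x y. \<chi> (x + y) = \<chi> x * \<chi> y)}"

text \<open>The ring Z[dual G]: integral linear combinations of characters, as functions on G.\<close>
definition int_char_comb :: "('a::ab_group_add \<Rightarrow> complex) set" where
  "int_char_comb = {f. \<exists>S c. finite S \<and> S \<subseteq> characters \<and>
      f = (\<lambda>x. \<Sum>\<chi>\<in>S. of_int (c \<chi>) * \<chi> x)}"

definition mahler_m :: "('a::{finite,ab_group_add} \<Rightarrow> complex) \<Rightarrow> ereal" where
  "mahler_m f = (if \<exists>x. f x = 0 then -\<infinity>
     else ereal ((\<Sum>x\<in>UNIV. ln (cmod (f x))) / real (card (UNIV :: 'a set))))"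

definition lehmer_const :: "'a::{finite,ab_group_add} itself \<Rightarrow> ereal" where
  "lehmer_const _ = Inf {mahler_m f | f :: 'a \<Rightarrow> complex. f \<in> int_char_comb \<and> mahler_m f > 0}"

end

theory Submission
  imports Defs "HOL-Library.FuncSet"
begin

primrec nmul :: "nat \<Rightarrow> 'a::ab_group_add \<Rightarrow> 'a" where
  "nmul 0 g = 0"
| "nmul (Suc k) g = g + nmul k g"

lemma nmul_add: "nmul (a + b) g = nmul a g + nmul b g"
  by (induction a) (auto simp: add.assoc)

lemma nmul_mult: "nmul (a * b) g = nmul a (nmul b g)"
  by (induction a) (auto simp: nmul_add)

lemma nmul_one[simp]: "nmul 1 g = g"
  by simp

definition subgrp :: "'a::ab_group_add set \<Rightarrow> bool" where
  "subgrp H \<longleftrightarrow> 0 \<in> H \<and> (\<forall>x\<in>H. \<forall>y\<in>H. x + y \<in> H) \<and> (\<forall>x\<in>H. - x \<in> H)"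

definition pchar :: "'a::ab_group_add set \<Rightarrow> ('a \<Rightarrow> complex) \<Rightarrow> bool" where
  "pchar H \<chi> \<longleftrightarrow> \<chi> 0 = 1 \<and> (\<forall>x\<in>H. \<forall>y\<in>H. \<chi> (x + y) = \<chi> x * \<chi> y)"

lemma subgrp_nmul: "subgrp H \<Longrightarrow> x \<in> H \<Longrightarrow> nmul k x \<in> H"
  by (induction k) (auto simp: subgrp_def)

lemma subgrp_diff: "subgrp H \<Longrightarrow> x \<in> H \<Longrightarrow> y \<in> H \<Longrightarrow> x - y \<in> H"
  unfolding subgrp_def by (metis diff_conv_add_uminus)

lemma pchar_nmul: "subgrp H \<Longrightarrow> pchar H \<chi> \<Longrightarrow> x \<in> H \<Longrightarrow> \<chi> (nmul k x) = \<chi> x ^ k"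
proof (induction k)
  case 0 then show ?case by (simp add: pchar_def)
next
  case (Suc k)
  then show ?case using subgrp_nmul[of H x k] by (simp add: pchar_def)
qed

lemma ex_period:
  fixes g :: "'a::{finite,ab_group_add}"
  shows "\<exists>k>0. nmul k g = 0"
proof -
  have "\<not> inj (\<lambda>k::nat. nmul k g)"
  proof
    assume "inj (\<lambda>k::nat. nmul k g)"
    then have "finite (UNIV :: nat set)"
      using finite_imageD[of "\<lambda>k::nat. nmul k g" UNIV] by simp
    then show False by simp
  qed
  then obtain i j where ij: "i \<noteq> j" "nmul i g = nmul j g"
    unfolding inj_def by blast
  show ?thesis
  proof (cases "i < j")
    case True
    have "nmul j g = nmul (j - i) g + nmul i g"
      using True nmul_add[of "j - i" i g] by simp
    then show ?thesis using ij True by (intro exI[of _ "j - i"]) auto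
  next
    case False
    then have "j < i" using ij by simp
    have "nmul i g = nmul (i - j) g + nmul j g"
      using \<open>j < i\<close> nmul_add[of "i - j" j g] by simp
    then show ?thesis using ij \<open>j < i\<close> by (intro exI[of _ "i - j"]) auto
  qed
qed

lemma ex_period_in:
  fixes g :: "'a::{finite,ab_group_add}"
  assumes "subgrp H"
  shows "\<exists>k>0. nmul k g \<in> H"
  using ex_period[of g] assms by (auto simp: subgrp_def)

lemma ex_croot: "0 < m \<Longrightarrow> \<exists>w::complex. w ^ m = z"
proof -
  assume m: "0 < m"
  define w where "w = rcis (root m (cmod z)) (Arg z / real m)"
  have "w ^ m = rcis (root m (cmod z) ^ m) (real m * (Arg z / real m))"
    unfolding w_def by (rule DeMoivre2)
  also have "\<dots> = rcis (cmod z) (Arg z)"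
    using m by (simp add: real_root_pow_pos2)
  also have "\<dots> = z" by (rule rcis_cmod_Arg)
  finally show ?thesis by blast
qed


lemma step_wd:
  fixes g :: "'a::{finite,ab_group_add}"
  assumes H: "subgrp H" and chi: "pchar H \<chi>"
    and m_def: "m = (LEAST k. 0 < k \<and> nmul k g \<in> H)"
    and w: "w ^ m = \<chi> (nmul m g)"
    and h: "h \<in> H" and h': "h' \<in> H" and k: "k' \<le> k"
    and eq: "h + nmul k g = h' + nmul k' g"
  shows "\<chi> h * w ^ k = \<chi> h' * w ^ k'"
proof -
  obtain k0 where k0: "0 < k0" "nmul k0 g \<in> H" using ex_period_in[OF H, of g] by blast
  have m: "0 < m \<and> nmul m g \<in> H"
    unfolding m_def by (rule LeastI[of _ k0]) (use k0 in simp)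
  have mmin: "\<And>r. 0 < r \<Longrightarrow> nmul r g \<in> H \<Longrightarrow> m \<le> r"
    unfolding m_def by (rule Least_le) simp
  define d where "d = k - k'"
  have kd: "k = d + k'" using k d_def by simp
  have "h' = h + nmul d g"
    using eq unfolding kd nmul_add by (simp add: algebra_simps)
  have dH: "nmul d g \<in> H"
    using \<open>h' = h + nmul d g\<close> subgrp_diff[OF H h' h] by (simp add: algebra_simps)
  define q where "q = d div m"
  define r where "r = d mod m"
  have dqr: "d = r + q * m" unfolding q_def r_def by simp
  have "nmul d g = nmul r g + nmul q (nmul m g)"
    unfolding dqr nmul_add nmul_mult ..
  then have "nmul r g = nmul d g - nmul q (nmul m g)" by (simp add: algebra_simps)
  then have rH: "nmul r g \<in> H"
    using subgrp_diff[OF H dH subgrp_nmul[OF H, of "nmul m g" q]] m by simp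
  have "r < m" unfolding r_def using m by simp
  then have "r = 0" using mmin[OF _ rH] by (cases "r = 0") auto
  then have hq: "h' = h + nmul q (nmul m g)"
    using \<open>h' = h + nmul d g\<close> dqr by (simp add: nmul_mult)
  have "\<chi> h' = \<chi> h * \<chi> (nmul m g) ^ q"
    using chi hq h subgrp_nmul[OF H, of "nmul m g" q] m pchar_nmul[OF H chi, of "nmul m g" q]
    by (simp add: pchar_def)
  also have "\<dots> = \<chi> h * w ^ (m * q)" by (simp add: w power_mult)
  finally have "\<chi> h' * w ^ k' = \<chi> h * w ^ (m * q + k')" by (simp add: power_add)
  also have "m * q + k' = k" using kd dqr \<open>r = 0\<close> by simp
  finally show ?thesis by simp
qed

lemma step_wd':
  fixes g :: "'a::{finite,ab_group_add}"
  assumes H: "subgrp H" and chi: "pchar H \<chi>"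
    and m_def: "m = (LEAST k. 0 < k \<and> nmul k g \<in> H)"
    and w: "w ^ m = \<chi> (nmul m g)"
    and h: "h \<in> H" and h': "h' \<in> H"
    and eq: "h + nmul k g = h' + nmul k' g"
  shows "\<chi> h * w ^ k = \<chi> h' * w ^ k'"
proof (cases "k' \<le> k")
  case True then show ?thesis using step_wd[OF assms(1-6) True eq] by simp
next
  case False then show ?thesis using step_wd[OF assms(1-4) h' h _ eq[symmetric]] by simp
qed


lemma step:
  fixes g :: "'a::{finite,ab_group_add}"
  assumes H: "subgrp H" and chi: "pchar H \<chi>" and g: "g \<notin> H"
    and m_def: "m = (LEAST k. 0 < k \<and> nmul k g \<in> H)"
    and w: "w ^ m = \<chi> (nmul m g)"
  shows "\<exists>H' \<psi>. subgrp H' \<and> pchar H' \<psi> \<and> H \<subseteq> H' \<and> g \<in> H' \<and> \<psi> g = w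
            \<and> (\<forall>h\<in>H. \<psi> h = \<chi> h)"
proof -
  obtain k0 where k0: "0 < k0" "nmul k0 g \<in> H" using ex_period_in[OF H, of g] by blast
  have m: "0 < m \<and> nmul m g \<in> H"
    unfolding m_def by (rule LeastI[of _ k0]) (use k0 in simp)
  define H' where "H' = {h + nmul k g | h k. h \<in> H}"
  define P where "P = (\<lambda>y p. fst p \<in> H \<and> y = fst p + nmul (snd p) g)"
  define \<psi> where "\<psi> = (\<lambda>y. \<chi> (fst (SOME p. P y p)) * w ^ snd (SOME p. P y p))"
  have val: "\<psi> (h + nmul k g) = \<chi> h * w ^ k" if "h \<in> H" for h k
  proof -
    have "P (h + nmul k g) (h, k)" using that by (simp add: P_def)
    then have "P (h + nmul k g) (SOME p. P (h + nmul k g) p)" by (rule someI)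
    moreover obtain a b where ab: "(SOME p. P (h + nmul k g) p) = (a, b)" by fastforce
    ultimately have "a \<in> H" "a + nmul b g = h + nmul k g" by (auto simp: P_def)
    then have "\<chi> a * w ^ b = \<chi> h * w ^ k"
      using step_wd'[OF H chi m_def w, of a h b k] that by simp
    then show ?thesis unfolding \<psi>_def ab by simp
  qed
  have H0: "0 \<in> H" using H by (simp add: subgrp_def)
  have "subgrp H'"
    unfolding subgrp_def
  proof (intro conjI ballI)
    show "0 \<in> H'" unfolding H'_def using H0 by (intro CollectI exI[of _ 0]) auto
  next
    fix x y assume "x \<in> H'" "y \<in> H'"
    then obtain h1 k1 h2 k2 where "h1 \<in> H" "h2 \<in> H" "x = h1 + nmul k1 g" "y = h2 + nmul k2 g"
      unfolding H'_def by blast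
    then show "x + y \<in> H'" unfolding H'_def using H
      by (intro CollectI exI[of _ "h1 + h2"] exI[of _ "k1 + k2"])
         (auto simp: nmul_add subgrp_def algebra_simps)
  next
    fix x assume "x \<in> H'"
    then obtain h k where hk: "h \<in> H" "x = h + nmul k g"
      unfolding H'_def by blast
    have e: "nmul (k * (m - 1)) g + nmul k g = nmul k (nmul m g)"
      using m by (simp add: nmul_add[symmetric] nmul_mult[symmetric] algebra_simps)
    have "- x = (- h - nmul k (nmul m g)) + nmul (k * (m - 1)) g"
      using hk e by (simp add: algebra_simps)
    moreover have "- h - nmul k (nmul m g) \<in> H"
      using subgrp_diff[OF H _ subgrp_nmul[OF H, of "nmul m g" k]] hk m H
      by (simp add: subgrp_def)
    ultimately show "- x \<in> H'" unfolding H'_def by blast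
  qed
  moreover have "pchar H' \<psi>"
    unfolding pchar_def
  proof (intro conjI ballI)
    show "\<psi> 0 = 1" using val[OF H0, of 0] chi by (simp add: pchar_def)
  next
    fix x y assume "x \<in> H'" "y \<in> H'"
    then obtain h1 k1 h2 k2 where hh: "h1 \<in> H" "h2 \<in> H" "x = h1 + nmul k1 g" "y = h2 + nmul k2 g"
      unfolding H'_def by blast
    have "x + y = (h1 + h2) + nmul (k1 + k2) g" using hh by (simp add: nmul_add algebra_simps)
    moreover have "h1 + h2 \<in> H" using hh H by (simp add: subgrp_def)
    ultimately have "\<psi> (x + y) = \<chi> (h1 + h2) * w ^ (k1 + k2)" using val by simp
    also have "\<dots> = \<psi> x * \<psi> y" using hh val chi by (simp add: pchar_def power_add)
    finally show "\<psi> (x + y) = \<psi> x * \<psi> y" .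
  qed
  moreover have "H \<subseteq> H'" unfolding H'_def by (force intro: exI[of _ 0])
  moreover have "g \<in> H'" unfolding H'_def using H0
    by (intro CollectI exI[of _ 0] exI[of _ 1]) auto
  moreover have "\<psi> g = w" using val[OF H0, of 1] chi by (simp add: pchar_def)
  moreover have "\<forall>h\<in>H. \<psi> h = \<chi> h" using val[of _ 0] by simp
  ultimately show ?thesis by blast
qed


lemma extend:
  fixes \<chi> :: "'a::{finite,ab_group_add} \<Rightarrow> complex"
  assumes "subgrp H" "pchar H \<chi>"
  shows "\<exists>\<psi>. pchar UNIV \<psi> \<and> (\<forall>h\<in>H. \<psi> h = \<chi> h)"
  using assms
proof (induction "card (UNIV - H)" arbitrary: H \<chi> rule: less_induct)
  case less
  show ?case
  proof (cases "H = UNIV")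
    case True then show ?thesis using less.prems by blast
  next
    case False
    then obtain g where g: "g \<notin> H" by blast
    define m where "m = (LEAST k. 0 < k \<and> nmul k g \<in> H)"
    have "m > 0"
    proof -
      obtain k0 where k0: "0 < k0" "nmul k0 g \<in> H" using ex_period_in[OF less.prems(1), of g] by blast
      show ?thesis unfolding m_def by (rule conjunct1[OF LeastI[of _ k0]]) (use k0 in simp)
    qed
    then obtain w where w: "w ^ m = \<chi> (nmul m g)" using ex_croot by blast
    obtain H' \<psi> where H': "subgrp H'" "pchar H' \<psi>" "H \<subseteq> H'" "g \<in> H'"
      "\<forall>h\<in>H. \<psi> h = \<chi> h"
      using step[OF less.prems g m_def w] by blast
    have "card (UNIV - H') < card (UNIV - H)"
      by (rule psubset_card_mono) (use H' g in auto)
    from less.hyps[OF this H'(1,2)] obtain \<phi> where "pchar UNIV \<phi>" "\<forall>h\<in>H'. \<phi> h = \<psi> h"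
      by blast
    then have "\<forall>h\<in>H. \<phi> h = \<chi> h" using H' by auto
    then show ?thesis using \<open>pchar UNIV \<phi>\<close> by blast
  qed
qed

lemma pchar_UNIV_char: "pchar UNIV \<chi> \<Longrightarrow> \<chi> \<in> characters"
  by (simp add: pchar_def characters_def)

lemma separate:
  fixes x :: "'a::{finite,ab_group_add}"
  assumes "x \<noteq> 0"
  shows "\<exists>\<chi>\<in>characters. \<chi> x \<noteq> 1"
proof -
  have H: "subgrp {0::'a}" by (simp add: subgrp_def)
  have chi: "pchar {0::'a} (\<lambda>_. 1)" by (simp add: pchar_def)
  define m where "m = (LEAST k. 0 < k \<and> nmul k x \<in> {0})"
  obtain k0 where k0: "0 < k0" "nmul k0 x \<in> {0}" using ex_period_in[OF H, of x] by blast
  have m: "0 < m \<and> nmul m x \<in> {0}"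
    unfolding m_def by (rule LeastI[of _ k0]) (use k0 in simp)
  have "m \<noteq> 1" using m assms by auto
  then have m2: "m \<ge> 2" using m by linarith
  define w where "w = cis (2 * pi / real m)"
  have w: "w ^ m = (\<lambda>_. 1) (nmul m x)" unfolding w_def DeMoivre using m by simp
  have w1: "w \<noteq> 1"
  proof
    assume "w = 1"
    then have "cos (2 * pi / real m) = 1" unfolding w_def by (metis cis.sel(1) one_complex.sel(1))
    then obtain n :: int where n: "2 * pi / real m = real_of_int n * 2 * pi"
      using cos_one_2pi_int[of "2 * pi / real m"] by blast
    then have "1 = real_of_int n * real m" using m by (simp add: field_simps)
    then have "1 = n * int m" by (metis of_int_eq_1_iff of_int_mult of_int_of_nat_eq)
    then have "int m dvd 1" by (metis dvd_triv_right)
    then show False using m2 by simp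
  qed
  obtain H' \<psi> where H': "subgrp H'" "pchar H' \<psi>" "x \<in> H'" "\<psi> x = w"
    using step[OF H chi _ m_def w] assms by blast
  obtain \<phi> where "pchar UNIV \<phi>" "\<forall>h\<in>H'. \<phi> h = \<psi> h" using extend[OF H'(1,2)] by blast
  then show ?thesis using H' w1 pchar_UNIV_char by metis
qed


lemma char_mult: "\<chi> \<in> characters \<Longrightarrow> \<chi> (x + y) = \<chi> x * \<chi> y"
  by (simp add: characters_def)

lemma char_zero: "\<chi> \<in> characters \<Longrightarrow> \<chi> 0 = 1"
  by (simp add: characters_def)

lemma char_nz: "\<chi> \<in> characters \<Longrightarrow> \<chi> x \<noteq> 0"
  using char_mult[of \<chi> x "-x"] char_zero[of \<chi>] by auto

lemma char_nmul: "\<chi> \<in> characters \<Longrightarrow> \<chi> (nmul k x) = \<chi> x ^ k"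
  by (induction k) (auto simp: char_mult char_zero)

lemma finite_chars: "finite (characters :: ('a::{finite,ab_group_add} \<Rightarrow> complex) set)"
proof -
  define per where "per = (\<lambda>x::'a. SOME k. 0 < k \<and> nmul k x = 0)"
  have per: "0 < per x \<and> nmul (per x) x = 0" for x
    unfolding per_def by (rule someI_ex) (rule ex_period)
  define R where "R = (\<Union>x. {z::complex. z ^ per x = 1})"
  have fR: "finite R" unfolding R_def using per by (auto intro!: finite_roots_unity simp: Suc_le_eq)
  have "characters \<subseteq> PiE UNIV (\<lambda>_::'a. R)"
  proof
    fix \<chi> :: "'a \<Rightarrow> complex" assume c: "\<chi> \<in> characters"
    have "\<chi> x \<in> R" for x
      using char_nmul[OF c, of "per x" x] per[of x] char_zero[OF c] unfolding R_def by auto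
    then show "\<chi> \<in> PiE UNIV (\<lambda>_. R)" by auto
  qed
  moreover have "finite (PiE UNIV (\<lambda>_::'a. R))" using fR by (intro finite_PiE) auto
  ultimately show ?thesis by (rule finite_subset)
qed

lemma triv_char: "(\<lambda>_. 1) \<in> characters"
  by (simp add: characters_def)

lemma charsum_vanish:
  fixes x :: "'a::{finite,ab_group_add}"
  assumes "x \<noteq> 0"
  shows "(\<Sum>\<chi>\<in>characters. \<chi> x) = 0"
proof -
  obtain \<chi>0 where c0: "\<chi>0 \<in> characters" "\<chi>0 x \<noteq> 1" using separate[OF assms] by blast
  have nz: "\<And>y. \<chi>0 y \<noteq> 0" using char_nz[OF c0(1)] by blast
  have "(\<Sum>\<chi>\<in>characters. \<chi> x) = (\<Sum>\<chi>\<in>characters. \<chi>0 x * \<chi> x)"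
    by (rule sum.reindex_bij_witness[of _ "\<lambda>\<chi> y. \<chi>0 y * \<chi> y" "\<lambda>\<chi> y. \<chi> y / \<chi>0 y"])
       (use c0 nz in \<open>auto simp: characters_def\<close>)
  also have "\<dots> = \<chi>0 x * (\<Sum>\<chi>\<in>characters. \<chi> x)" by (simp add: sum_distrib_left)
  finally show ?thesis using c0(2)
    by (metis mult_cancel_right1 mult.commute)
qed

lemma sum_char_vanish:
  fixes \<chi> :: "'a::{finite,ab_group_add} \<Rightarrow> complex"
  assumes c: "\<chi> \<in> characters" and nt: "\<chi> \<noteq> (\<lambda>_. 1)"
  shows "(\<Sum>x\<in>UNIV. \<chi> x) = 0"
proof -
  obtain y where y: "\<chi> y \<noteq> 1" using nt by auto
  have "(\<Sum>x\<in>UNIV. \<chi> x) = (\<Sum>x\<in>UNIV. \<chi> (x + y))"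
    by (rule sum.reindex_bij_witness[of _ "\<lambda>x. x + y" "\<lambda>x. x - y"]) auto
  also have "\<dots> = \<chi> y * (\<Sum>x\<in>UNIV. \<chi> x)"
    by (simp add: char_mult[OF c] sum_distrib_left mult.commute)
  finally show ?thesis using y by (metis mult_cancel_right1 mult.commute)
qed

lemma card_chars:
  "card (characters :: ('a::{finite,ab_group_add} \<Rightarrow> complex) set) = card (UNIV :: 'a set)"
proof -
  let ?C = "characters :: ('a \<Rightarrow> complex) set"
  have "(\<Sum>x\<in>UNIV. \<Sum>\<chi>\<in>?C. \<chi> x) = (\<Sum>\<chi>\<in>?C. \<Sum>x\<in>UNIV. \<chi> x)"
    by (rule sum.swap)
  also have "\<dots> = (\<Sum>\<chi>\<in>?C. if \<chi> = (\<lambda>_. 1) then of_nat (card (UNIV :: 'a set)) else 0)"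
    by (rule sum.cong) (auto simp: sum_char_vanish)
  also have "\<dots> = of_nat (card (UNIV :: 'a set))"
    by (subst sum.delta[OF finite_chars]) (simp add: triv_char)
  finally have 1: "(\<Sum>x\<in>UNIV. \<Sum>\<chi>\<in>?C. \<chi> x) = of_nat (card (UNIV :: 'a set))" .
  have "(\<Sum>x\<in>UNIV. \<Sum>\<chi>\<in>?C. \<chi> x) = (\<Sum>x\<in>UNIV. if x = 0 then (\<Sum>\<chi>\<in>?C. \<chi> x) else 0)"
    by (rule sum.cong) (auto simp: charsum_vanish)
  also have "\<dots> = (\<Sum>\<chi>\<in>?C. \<chi> 0)" by (simp add: sum.delta)
  also have "\<dots> = of_nat (card ?C)" by (simp add: char_zero)
  finally show ?thesis using 1 by simp
qed


theorem lemma4p4: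
  assumes "card (UNIV :: 'a::{finite,ab_group_add} set) \<ge> 3"
  shows "lehmer_const TYPE('a) \<le> ereal (ln (real (card (UNIV :: 'a set)) - 1) / real (card (UNIV :: 'a set)))"
proof -
  let ?C = "characters :: ('a \<Rightarrow> complex) set"
  let ?n = "card (UNIV :: 'a set)"
  define f where "f = (\<lambda>x::'a. \<Sum>\<chi>\<in>?C - {\<lambda>_. 1}. of_int ((\<lambda>_. 1) \<chi>) * \<chi> x)"
  have fin: "f \<in> int_char_comb"
    unfolding int_char_comb_def f_def
    by (intro CollectI exI[of _ "?C - {\<lambda>_. 1}"] exI[of _ "\<lambda>_. 1"])
       (use finite_chars[where 'a='a] in auto)
  have fx: "f x = (\<Sum>\<chi>\<in>?C. \<chi> x) - 1" for x
    unfolding f_def by (simp add: sum_diff1[OF finite_chars] triv_char)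
  have f0: "f 0 = of_nat ?n - 1"
    using fx[of 0] card_chars[where 'a='a] by (simp add: char_zero)
  have f1: "f x = - 1" if "x \<noteq> 0" for x
  proof -
    have "(\<Sum>\<chi>\<in>?C. \<chi> x) = 0" using that by (rule charsum_vanish)
    then show ?thesis unfolding fx by simp
  qed
  have nz: "f x \<noteq> 0" for x
  proof (cases "x = 0")
    case True
    have "?n \<noteq> 1" using assms by simp
    then have "of_nat ?n \<noteq> (1::complex)" by (metis of_nat_1 of_nat_eq_iff)
    then have "of_nat ?n - 1 \<noteq> (0::complex)" by simp
    then show ?thesis using True f0 by simp
  qed (simp add: f1)
  have cm0: "cmod (f 0) = real ?n - 1"
  proof -
    have "f 0 = complex_of_real (real ?n - 1)" using f0 by simp
    then have "cmod (f 0) = \<bar>real ?n - 1\<bar>" by (simp only: norm_of_real)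
    then show ?thesis using assms by simp
  qed
  have "(\<Sum>x\<in>UNIV. ln (cmod (f x))) = ln (cmod (f 0)) + (\<Sum>x\<in>UNIV - {0}. ln (cmod (f x)))"
    by (simp add: sum.remove)
  also have "(\<Sum>x\<in>UNIV - {0}. ln (cmod (f x))) = 0"
    by (rule sum.neutral) (auto simp: f1)
  finally have s: "(\<Sum>x\<in>UNIV. ln (cmod (f x))) = ln (real ?n - 1)" using cm0 by simp
  have m: "mahler_m f = ereal (ln (real ?n - 1) / real ?n)"
    unfolding mahler_m_def using nz s by simp
  have "ln (real ?n - 1) > 0" using assms by simp
  moreover have "real ?n > 0" using assms by simp
  ultimately have pos: "mahler_m f > 0" unfolding m by simp
  have "lehmer_const TYPE('a) \<le> mahler_m f"
    unfolding lehmer_const_def by (rule Inf_lower) (use fin pos in blast)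
  then show ?thesis using m by simp
qed

end
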